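(* Let $n\ge2$. If $K$ is a bounded measurable set in $\mathbb{R}^n$, then $V(K^{\diamond\diamond})\ge V(K)$. If in addition $K$ is a star body, equality holds if and only if $K=K^{\diamond\diamond}$.
   Context: For $x,y\in\mathbb{R}^n$ let $[x,y]=\sqrt{|x|^2|y|^2-(x\cdot y)^2}$. The sine polar body of $K\subset\mathbb{R}^n$ is $K^{\diamond}=\{x\in\mathbb{R}^n:[x,y]\le1\text{ for all }y\in K\}$, and $K^{\diamond\diamond}=(K^{\diamond})^{\diamond}$. $V$ is volume. A star body is a set $\{ru:u\in S^{n-1},0\le r\le\rho(u)\}$ with $\rho:S^{n-1}\to(0,\infty)$ continuous. *)

theory Defs
  imports "HOL-Analysis.Analysis"
begin

definition sine_bracket :: "real^'n \<Rightarrow> real^'n \<Rightarrow> real" where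
  "sine_bracket x y = sqrt ((norm x)\<^sup>2 * (norm y)\<^sup>2 - (x \<bullet> y)\<^sup>2)"

definition sine_polar :: "(real^'n) set \<Rightarrow> (real^'n) set" where
  "sine_polar K = {x. \<forall>y\<in>K. sine_bracket x y \<le> 1}"

definition star_body :: "(real^'n) set \<Rightarrow> bool" where
  "star_body K \<longleftrightarrow> (\<exists>\<rho> :: real^'n \<Rightarrow> real.
      continuous_on (sphere 0 1) \<rho> \<and> (\<forall>u\<in>sphere 0 1. \<rho> u > 0) \<and>
      K = {r *\<^sub>R u | r u. u \<in> sphere 0 1 \<and> 0 \<le> r \<and> r \<le> \<rho> u})"

end

theory Submission
  imports Defs
begin

lemma sb_nonneg_arg: "0 \<le> (norm x)\<^sup>2 * (norm y)\<^sup>2 - ((x::real^'n) \<bullet> y)\<^sup>2"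
proof -
  have "\<bar>x \<bullet> y\<bar> \<le> norm x * norm y" by (rule Cauchy_Schwarz_ineq2)
  hence "(x \<bullet> y)\<^sup>2 \<le> (norm x * norm y)\<^sup>2"
    by (metis abs_ge_zero power2_abs power_mono)
  thus ?thesis by (simp add: power_mult_distrib)
qed

lemma sb_nonneg: "0 \<le> sine_bracket x y"
  unfolding sine_bracket_def using sb_nonneg_arg by simp

lemma sb_comm: "sine_bracket x y = sine_bracket y x"
  unfolding sine_bracket_def by (simp add: inner_commute mult.commute)

lemma sb_scale: "sine_bracket (t *\<^sub>R x) y = \<bar>t\<bar> * sine_bracket x y"
proof -
  have "(norm (t *\<^sub>R x))\<^sup>2 * (norm y)\<^sup>2 - ((t *\<^sub>R x) \<bullet> y)\<^sup>2
        = t\<^sup>2 * ((norm x)\<^sup>2 * (norm y)\<^sup>2 - (x \<bullet> y)\<^sup>2)"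
    by (simp add: power_mult_distrib algebra_simps)
  thus ?thesis unfolding sine_bracket_def by (simp add: real_sqrt_mult)
qed

lemma sb_le: "sine_bracket x y \<le> norm x * norm y"
proof -
  have "(norm x)\<^sup>2 * (norm y)\<^sup>2 - (x \<bullet> y)\<^sup>2 \<le> (norm x * norm y)\<^sup>2"
    by (simp add: power_mult_distrib)
  hence "sine_bracket x y \<le> sqrt ((norm x * norm y)\<^sup>2)"
    unfolding sine_bracket_def using real_sqrt_le_mono by blast
  thus ?thesis by simp
qed

lemma sb_orth: "x \<bullet> y = 0 \<Longrightarrow> sine_bracket x y = norm x * norm y"
  unfolding sine_bracket_def by (simp add: real_sqrt_mult power_mult_distrib[symmetric])

lemma sb_proj:
  fixes x y :: "real^'n"
  assumes "y \<noteq> 0"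
  shows "sine_bracket x y = norm ((norm y)\<^sup>2 *\<^sub>R x - (x \<bullet> y) *\<^sub>R y) / norm y"
proof -
  let ?P = "(norm y)\<^sup>2 *\<^sub>R x - (x \<bullet> y) *\<^sub>R y"
  have "(norm ?P)\<^sup>2 = (norm y)\<^sup>2 * ((norm x)\<^sup>2 * (norm y)\<^sup>2 - (x \<bullet> y)\<^sup>2)"
  proof -
    have "(norm ?P)\<^sup>2 = ?P \<bullet> ?P" by (simp add: power2_norm_eq_inner)
    also have "\<dots> = (norm y)\<^sup>2 * (norm y)\<^sup>2 * (x \<bullet> x) - 2 * (norm y)\<^sup>2 * (x \<bullet> y)\<^sup>2 + (x \<bullet> y)\<^sup>2 * (y \<bullet> y)"
      by (simp add: inner_diff_left inner_diff_right inner_commute[of y x] algebra_simps power2_eq_square)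
    also have "\<dots> = (norm y)\<^sup>2 * ((norm x)\<^sup>2 * (norm y)\<^sup>2 - (x \<bullet> y)\<^sup>2)"
      by (simp add: dot_square_norm algebra_simps power2_eq_square)
    finally show ?thesis .
  qed
  hence "(norm x)\<^sup>2 * (norm y)\<^sup>2 - (x \<bullet> y)\<^sup>2 = ((norm ?P) / norm y)\<^sup>2"
    using assms by (simp add: power_divide)
  thus ?thesis unfolding sine_bracket_def by simp
qed

lemma sb_triangle: "sine_bracket (a + b) y \<le> sine_bracket a y + sine_bracket (b::real^'n) y"
proof (cases "y = 0")
  case True thus ?thesis by (simp add: sine_bracket_def)
next
  case False
  have "(norm y)\<^sup>2 *\<^sub>R (a + b) - ((a + b) \<bullet> y) *\<^sub>R y
     = ((norm y)\<^sup>2 *\<^sub>R a - (a \<bullet> y) *\<^sub>R y) + ((norm y)\<^sup>2 *\<^sub>R b - (b \<bullet> y) *\<^sub>R y)"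
    by (simp add: algebra_simps inner_add_left)
  thus ?thesis using False
    by (simp add: sb_proj add_divide_distrib[symmetric] divide_right_mono norm_triangle_ineq)
qed

lemma sb_cont: "continuous_on UNIV (\<lambda>x. sine_bracket x y)"
  unfolding sine_bracket_def by (intro continuous_intros)

lemma closed_sine_polar: "closed (sine_polar K)"
proof -
  have "sine_polar K = (\<Inter>y\<in>K. {x. sine_bracket x y \<le> 1})"
    unfolding sine_polar_def by auto
  moreover have "closed {x. sine_bracket x y \<le> 1}" for y
    by (rule closed_Collect_le[OF sb_cont continuous_on_const])
  ultimately show ?thesis by auto
qed

lemma subset_double: "K \<subseteq> sine_polar (sine_polar K)"
  unfolding sine_polar_def by (auto, metis sb_comm)

lemma orth_exists:
  fixes y :: "real^'n"
  assumes "CARD('n) \<ge> 2"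
  shows "\<exists>v. v \<noteq> 0 \<and> v \<bullet> y = 0"
proof -
  obtain i j :: 'n where ij: "i \<noteq> j"
    using assms by (metis (full_types) card_2_iff' card_le_Suc_iff numeral_2_eq_2 ex_card)
  show ?thesis
  proof (cases "y$i = 0")
    case True
    thus ?thesis by (intro exI[of _ "axis i 1"]) (auto simp: inner_axis' axis_eq_0_iff)
  next
    case False
    let ?v = "y$j *\<^sub>R axis i 1 - y$i *\<^sub>R axis j (1::real)"
    have "?v $ j = - y$i" using ij by (simp add: axis_def)
    hence "?v \<noteq> 0" using False by (metis neg_equal_0_iff_equal zero_index)
    moreover have "?v \<bullet> y = 0" by (simp add: inner_diff_left inner_axis')
    ultimately show ?thesis by blast
  qed
qed

lemma star_closed:
  assumes "star_body (K::(real^'n) set)"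
  shows "closed K"
proof -
  obtain \<rho> :: "real^'n \<Rightarrow> real" where c: "continuous_on (sphere 0 1) \<rho>" and p: "\<forall>u\<in>sphere 0 1. \<rho> u > 0"
    and K: "K = {r *\<^sub>R u | r u. u \<in> sphere 0 1 \<and> 0 \<le> r \<and> r \<le> \<rho> u}"
    using assms unfolding star_body_def by blast
  let ?f = "\<lambda>p::real \<times> (real^'n). (fst p * \<rho> (snd p)) *\<^sub>R snd p"
  have "K = ?f ` ({0..1} \<times> sphere 0 1)"
  proof
    show "K \<subseteq> ?f ` ({0..1} \<times> sphere 0 1)"
    proof
      fix x assume "x \<in> K"
      then obtain r u where "x = r *\<^sub>R u" "u \<in> sphere 0 1" "0 \<le> r" "r \<le> \<rho> u" using K by blast
      moreover have "\<rho> u > 0" using p \<open>u \<in> sphere 0 1\<close> by blast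
      ultimately have "x = ?f (r / \<rho> u, u)" "(r / \<rho> u, u) \<in> {0..1} \<times> sphere 0 1"
        by auto
      thus "x \<in> ?f ` ({0..1} \<times> sphere 0 1)" by blast
    qed
    show "?f ` ({0..1} \<times> sphere 0 1) \<subseteq> K"
    proof
      fix x assume "x \<in> ?f ` ({0..1} \<times> sphere 0 1)"
      then obtain t u where "t \<in> {0..1}" "u \<in> sphere 0 1" "x = (t * \<rho> u) *\<^sub>R u" by auto
      moreover have "\<rho> u > 0" using p \<open>u \<in> sphere 0 1\<close> by blast
      ultimately show "x \<in> K" unfolding K
        by (intro CollectI exI[of _ "t * \<rho> u"] exI[of _ u]) (auto simp: mult_le_cancel_right1)
    qed
  qed
  moreover have "compact (?f ` ({0..1} \<times> sphere 0 1))"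
  proof (rule compact_continuous_image)
    show "compact ({0..1::real} \<times> sphere (0::real^'n) 1)" by (intro compact_Times) auto
    have "continuous_on ({0..1} \<times> sphere 0 1) (\<lambda>p::real \<times> (real^'n). \<rho> (snd p))"
      by (rule continuous_on_compose2[OF c]) (auto intro: continuous_intros)
    thus "continuous_on ({0..1} \<times> sphere 0 1) ?f"
      by (intro continuous_intros) auto
  qed
  ultimately show ?thesis by (simp add: compact_imp_closed)
qed

lemma star_ball:
  assumes "star_body (K::(real^'n) set)"
  shows "\<exists>m>0. cball 0 m \<subseteq> K"
proof -
  obtain \<rho> :: "real^'n \<Rightarrow> real" where c: "continuous_on (sphere 0 1) \<rho>" and p: "\<forall>u\<in>sphere 0 1. \<rho> u > 0"
    and K: "K = {r *\<^sub>R u | r u. u \<in> sphere 0 1 \<and> 0 \<le> r \<and> r \<le> \<rho> u}"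
    using assms unfolding star_body_def by blast
  have ne: "sphere (0::real^'n) 1 \<noteq> {}" by simp
  obtain u0 where u0: "u0 \<in> sphere 0 1" "\<forall>u\<in>sphere 0 1. \<rho> u0 \<le> \<rho> u"
    using continuous_attains_inf[OF compact_sphere ne c] by blast
  define m where "m = \<rho> u0"
  have "m > 0" using p u0 m_def by blast
  moreover have "cball 0 m \<subseteq> K"
  proof
    fix x :: "real^'n" assume x: "x \<in> cball 0 m"
    show "x \<in> K"
    proof (cases "x = 0")
      case True
      have "x = 0 *\<^sub>R u0 \<and> u0 \<in> sphere 0 1 \<and> 0 \<le> (0::real) \<and> 0 \<le> \<rho> u0"
        using True u0(1) p by (auto simp: less_imp_le)
      thus ?thesis unfolding K by blast
    next
      case False
      let ?u = "x /\<^sub>R norm x"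
      have "?u \<in> sphere 0 1" using False by (simp add: norm_divide)
      hence "m \<le> \<rho> ?u" using u0 m_def by blast
      moreover have "norm x \<le> m" using x by simp
      ultimately show ?thesis unfolding K using False \<open>?u \<in> sphere 0 1\<close>
        by (intro CollectI exI[of _ "norm x"] exI[of _ ?u]) auto
    qed
  qed
  ultimately show ?thesis by blast
qed

lemma polar_bound:
  fixes K :: "(real^'n) set"
  assumes "CARD('n) \<ge> 2" "m > 0" "cball 0 m \<subseteq> K" "y \<in> sine_polar K"
  shows "norm y * m \<le> 1"
proof -
  obtain v where v: "v \<noteq> 0" "v \<bullet> y = 0" using orth_exists[OF assms(1)] by blast
  define w where "w = (m / norm v) *\<^sub>R v"
  have nw: "norm w = m" using v assms(2) by (simp add: w_def)
  hence "w \<in> K" using assms(3) by auto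
  hence "sine_bracket y w \<le> 1" using assms(4) unfolding sine_polar_def by blast
  moreover have "y \<bullet> w = 0" using v by (simp add: w_def inner_commute)
  ultimately show ?thesis using sb_orth nw by metis
qed

theorem lemma5p1:
  fixes K :: "(real^'n) set"
  assumes "CARD('n) \<ge> 2"
    and "bounded K"
    and "K \<in> sets lebesgue"
  shows "emeasure lebesgue (sine_polar (sine_polar K)) \<ge> emeasure lebesgue K
    \<and> (star_body K \<longrightarrow>
         (emeasure lebesgue (sine_polar (sine_polar K)) = emeasure lebesgue K
            \<longleftrightarrow> K = sine_polar (sine_polar K)))"
proof -
  let ?D = "sine_polar (sine_polar K)"
  have Dm: "?D \<in> sets lebesgue"
    using borel_closed[OF closed_sine_polar[of "sine_polar K"]] by (metis sets_lborel sets_completionI_sets)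
  have sub: "K \<subseteq> ?D" by (rule subset_double)
  have part1: "emeasure lebesgue ?D \<ge> emeasure lebesgue K"
    by (rule emeasure_mono[OF sub Dm])
  have part2: "emeasure lebesgue ?D = emeasure lebesgue K \<longleftrightarrow> K = ?D" if sb: "star_body K"
  proof
    assume "K = ?D" thus "emeasure lebesgue ?D = emeasure lebesgue K" by simp
  next
    assume eq: "emeasure lebesgue ?D = emeasure lebesgue K"
    show "K = ?D"
    proof (rule ccontr)
      assume "K \<noteq> ?D"
      then obtain z where z: "z \<in> ?D" "z \<notin> K" using sub by blast
      obtain m where m: "m > 0" "cball 0 m \<subseteq> K" using star_ball[OF sb] by blast
      have "z \<noteq> 0" using z m by (metis centre_in_cball less_imp_le subsetD)
      have "open (- K)" using star_closed[OF sb] by auto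
      then obtain e where e: "e > 0" "ball z e \<subseteq> - K" using z(2) open_contains_ball by blast
      define s where "s = min (1/2) (e / (2 * norm z))"
      have s: "s > 0" "s \<le> 1/2" "s * norm z \<le> e / 2"
        using e \<open>z \<noteq> 0\<close> by (auto simp: s_def min_def field_simps)
      define p where "p = (1 - s) *\<^sub>R z"
      define d where "d = min (e/2) (s * m)"
      have d: "d > 0" "d \<le> e/2" "d \<le> s * m" using s m e by (auto simp: d_def)
      have dpz: "dist p z \<le> e/2"
      proof -
        have "dist p z = norm (s *\<^sub>R z)" by (simp add: p_def dist_norm algebra_simps)
        thus ?thesis using s by simp
      qed
      have ball_sub: "ball p d \<subseteq> ?D - K"
      proof
        fix q assume q: "q \<in> ball p d"
        have "dist q z < e" using q dpz d dist_triangle[of q z p] by (simp add: dist_commute)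
        hence "q \<notin> K" using e by (metis ComplD dist_commute mem_ball subsetD)
        moreover have "q \<in> ?D"
          unfolding sine_polar_def[of "sine_polar K"]
        proof (intro CollectI ballI)
          fix y assume y: "y \<in> sine_polar K"
          have yb: "norm y * m \<le> 1" by (rule polar_bound[OF assms(1) m y])
          have zy: "sine_bracket z y \<le> 1" using z(1) y unfolding sine_polar_def by blast
          have "sine_bracket q y = sine_bracket (p + (q - p)) y" by simp
          also have "\<dots> \<le> sine_bracket p y + sine_bracket (q - p) y" by (rule sb_triangle)
          also have "sine_bracket p y = (1 - s) * sine_bracket z y"
            using s by (simp add: p_def sb_scale)
          also have "\<dots> \<le> 1 - s" using zy s by simp
          also have "sine_bracket (q - p) y \<le> norm (q - p) * norm y" by (rule sb_le)
          also have "norm (q - p) * norm y \<le> s"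
          proof -
            have "norm (q - p) < d" using q by (simp add: dist_norm norm_minus_commute)
            hence "norm (q - p) * norm y \<le> d * norm y" by (simp add: mult_right_mono)
            also have "\<dots> \<le> s * m * norm y" using d by (simp add: mult_right_mono)
            also have "\<dots> \<le> s" using yb s by (simp add: mult.commute mult.left_commute mult_left_le)
            finally show ?thesis .
          qed
          finally show "sine_bracket q y \<le> 1" by simp
        qed
        ultimately show "q \<in> ?D - K" by blast
      qed
      have fin: "emeasure lebesgue K \<noteq> \<infinity>"
      proof -
        obtain R c where "K \<subseteq> cball c R" using assms(2) unfolding bounded_subset_cball by blast
        hence "emeasure lebesgue K \<le> emeasure lebesgue (cball (c::real^'n) R)"
          by (intro emeasure_mono) simp_all
        also have "\<dots> = emeasure lborel (cball (c::real^'n) R)" by simp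
        also have "\<dots> < \<infinity>" by (rule emeasure_bounded_finite) simp
        finally show ?thesis by simp
      qed
      have "emeasure lebesgue (?D - K) = 0"
        using emeasure_Diff[OF fin Dm assms(3) sub] eq fin by (simp add: diff_eq_0_iff_ennreal top.not_eq_extremum)
      moreover obtain a b where box: "p \<in> box a b" "box a b \<subseteq> ball p d"
        using rational_boxes[OF d(1), of p] by metis
      have "0 < emeasure lebesgue (box a b)"
        using box by (auto simp: emeasure_lborel_box_eq mem_box algebra_simps intro!: prod_pos)
      also have "\<dots> \<le> emeasure lebesgue (?D - K)"
      proof (rule emeasure_mono)
        show "box a b \<subseteq> ?D - K" using box(2) ball_sub by (rule order_trans)
        show "?D - K \<in> sets lebesgue" using Dm assms(3) by (rule sets.Diff)
      qed
      ultimately show False by simp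
    qed
  qed
  show ?thesis using part1 part2 by blast
qed

end
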